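(* Let $\succ=(\succ_s)_{s\in S}$ be a priority profile in which every $\succ_s$ is a weak order on $I$. Then $$f^{\succ}\subseteq\bigcup_{\succ'\in\mathcal{E}^c(\succ)}f^{\succ'},$$ i.e., every student optimal stable matching for $\succ$ is the (unique) student optimal stable matching for some extension profile obtained via a single tiebreaking rule.
   Context: A weak order on $I$ is an asymmetric, transitive and negatively transitive ($(x,y)\notin B$ and $(y,z)\notin B$ imply $(x,z)\notin B$) relation; a total order is a complete weak order. School choice setup: $I$ is a finite set of students with $|I|\ge 3$, $S$ a finite set of schools. Each student $i$ has a total order $P_i$ on $S\cup\{\emptyset\}$; $sR_is'$ means $sP_is'$ or $s=s'$. Each school $s$ has capacity $q_s\in\mathbb{Z}_{++}$ and an asymmetric priority relation $\succ_s$ on $I$. A matching $\mu$ assigns each $i$ to $\mu(i)\in S\cup\{\emptyset\}$, $\mu(s)=\{i:\mu(i)=s\}$, $|\mu(s)|\le q_s$. $\mu$ is stable for $\succ$ if individually rational ($\mu(i)R_i\emptyset$), non-wasteful ($sP_i\mu(i)$ implies $|\mu(s)|=q_s$) and fair (no $s$, $j\in\mu(s)$, $i\notin\mu(s)$ with $sR_i\mu(i)$ and $(i,j)\in\succ_s$). Pareto dominance: $\mu'(i)R_i\mu(i)$ for all $i$, strict for some $i$. An SOSM for $\succ$ is a stable matching not Pareto dominated by any stable matching; $f^\succ$ is the set of SOSMs. Maximal set: $M(I',\succ_s)=\{i\in I':(j,i)\notin\succ_s\ \forall j\in I'\setminus\{i\}\}$. For bijections $r_s:I\to\{1,\dots,|I|\}$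 and $\tau=(r_s)_{s\in S}$, the $\tau$ tiebreaking SMO algorithm constructs, for each $s$, a total order $\succ'_s: i_1\,i_2\cdots i_{|I|}$ (meaning $(i_t,i_{t'})\in\succ'_s$ iff $t<t'$) where at step $t=1,\dots,|I|$, $i_t$ is the element of $M(I\setminus\{i_1,\dots,i_{t-1}\},\succ_s)$ with smallest $r_s$-value. $\tau$ is a single tiebreaking rule if $r_s=r_{s'}$ for all $s,s'\in S$. $\mathcal{E}^c(\succ)$ is the set of profiles $(\succ'_s)_{s\in S}$ obtained by the $\tau$ tiebreaking SMO algorithm for some single tiebreaking rule $\tau$. *)

theory Defs
  imports Main
begin

(* Students have type 'i, schools type 's; the null assignment \<emptyset> is None. *)

definition weak_order :: "'i set \<Rightarrow> 'i rel \<Rightarrow> bool" where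
  "weak_order I B \<longleftrightarrow> B \<subseteq> I \<times> I \<and>
     (\<forall>x\<in>I. \<forall>y\<in>I. (x,y) \<in> B \<longrightarrow> (y,x) \<notin> B) \<and>
     (\<forall>x\<in>I. \<forall>y\<in>I. \<forall>z\<in>I. (x,y) \<in> B \<longrightarrow> (y,z) \<in> B \<longrightarrow> (x,z) \<in> B) \<and>
     (\<forall>x\<in>I. \<forall>y\<in>I. \<forall>z\<in>I. (x,y) \<notin> B \<longrightarrow> (y,z) \<notin> B \<longrightarrow> (x,z) \<notin> B)"

definition total_order :: "'a set \<Rightarrow> 'a rel \<Rightarrow> bool" where
  "total_order A B \<longleftrightarrow> weak_order A B \<and>
     (\<forall>x\<in>A. \<forall>y\<in>A. x \<noteq> y \<longrightarrow> (x,y) \<in> B \<or> (y,x) \<in> B)"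

definition outcomes :: "'s set \<Rightarrow> 's option set" where
  "outcomes S = insert None (Some ` S)"

definition weak_pref :: "'s option rel \<Rightarrow> 's option \<Rightarrow> 's option \<Rightarrow> bool" where
  "weak_pref P a b \<longleftrightarrow> (a,b) \<in> P \<or> a = b"

definition assigned :: "'i set \<Rightarrow> ('i \<Rightarrow> 's option) \<Rightarrow> 's \<Rightarrow> 'i set" where
  "assigned I \<mu> s = {i \<in> I. \<mu> i = Some s}"

definition matching :: "'i set \<Rightarrow> 's set \<Rightarrow> ('s \<Rightarrow> nat) \<Rightarrow> ('i \<Rightarrow> 's option) \<Rightarrow> bool" where
  "matching I S q \<mu> \<longleftrightarrow> (\<forall>i\<in>I. \<mu> i \<in> outcomes S) \<and> (\<forall>i. i \<notin> I \<longrightarrow> \<mu> i = None) \<and>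
     (\<forall>s\<in>S. card (assigned I \<mu> s) \<le> q s)"

definition stable :: "'i set \<Rightarrow> 's set \<Rightarrow> ('i \<Rightarrow> 's option rel) \<Rightarrow> ('s \<Rightarrow> nat)
    \<Rightarrow> ('s \<Rightarrow> 'i rel) \<Rightarrow> ('i \<Rightarrow> 's option) \<Rightarrow> bool" where
  "stable I S P q pr \<mu> \<longleftrightarrow> matching I S q \<mu> \<and>
     (\<forall>i\<in>I. weak_pref (P i) (\<mu> i) None) \<and>
     (\<forall>i\<in>I. \<forall>s\<in>S. (Some s, \<mu> i) \<in> P i \<longrightarrow> card (assigned I \<mu> s) = q s) \<and>
     \<not> (\<exists>s\<in>S. \<exists>j\<in>assigned I \<mu> s. \<exists>i\<in>I. i \<notin> assigned I \<mu> s \<and>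
           weak_pref (P i) (Some s) (\<mu> i) \<and> (i, j) \<in> pr s)"

definition pareto_dominates :: "'i set \<Rightarrow> ('i \<Rightarrow> 's option rel) \<Rightarrow> ('i \<Rightarrow> 's option)
    \<Rightarrow> ('i \<Rightarrow> 's option) \<Rightarrow> bool" where
  "pareto_dominates I P \<mu>' \<mu> \<longleftrightarrow> (\<forall>i\<in>I. weak_pref (P i) (\<mu>' i) (\<mu> i)) \<and>
     (\<exists>i\<in>I. (\<mu>' i, \<mu> i) \<in> P i)"

definition SOSM :: "'i set \<Rightarrow> 's set \<Rightarrow> ('i \<Rightarrow> 's option rel) \<Rightarrow> ('s \<Rightarrow> nat)
    \<Rightarrow> ('s \<Rightarrow> 'i rel) \<Rightarrow> ('i \<Rightarrow> 's option) set" where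
  "SOSM I S P q pr = {\<mu>. stable I S P q pr \<mu> \<and>
     \<not> (\<exists>\<mu>'. stable I S P q pr \<mu>' \<and> pareto_dominates I P \<mu>' \<mu>)}"

definition maximal_set :: "'i set \<Rightarrow> 'i rel \<Rightarrow> 'i set" where
  "maximal_set I' B = {i \<in> I'. \<forall>j \<in> I' - {i}. (j, i) \<notin> B}"

fun smo_seq :: "'i set \<Rightarrow> ('i \<Rightarrow> nat) \<Rightarrow> 'i rel \<Rightarrow> nat \<Rightarrow> 'i list" where
  "smo_seq I r B 0 = []"
| "smo_seq I r B (Suc t) = smo_seq I r B t @
     [ARG_MIN r i. i \<in> maximal_set (I - set (smo_seq I r B t)) B]"

definition smo_order :: "'i set \<Rightarrow> ('i \<Rightarrow> nat) \<Rightarrow> 'i rel \<Rightarrow> 'i rel" where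
  "smo_order I r B = (let xs = smo_seq I r B (card I) in
     {(xs ! a, xs ! b) | a b. a < b \<and> b < card I})"

definition single_tb_extensions :: "'i set \<Rightarrow> 's set \<Rightarrow> ('s \<Rightarrow> 'i rel) \<Rightarrow> ('s \<Rightarrow> 'i rel) set" where
  "single_tb_extensions I S pr = {pr'. \<exists>r. bij_betw r I {1..card I} \<and>
     (\<forall>s\<in>S. pr' s = smo_order I r (pr s))}"

end

theory Submission
  imports Defs
begin


lemma wo_trans: "weak_order A B \<Longrightarrow> trans B"
  unfolding weak_order_def trans_def by blast

lemma wo_irrefl: "weak_order A B \<Longrightarrow> (x,x) \<notin> B"
  unfolding weak_order_def by blast

lemma maxset_ne:
  assumes wo: "weak_order I B" and fin: "finite I" and R: "R \<subseteq> I" "x \<in> R"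
  shows "\<exists>z. z \<in> maximal_set R B"
proof -
  have sub: "B \<subseteq> I \<times> I" using wo unfolding weak_order_def by blast
  have finB: "finite B" using finite_subset[OF sub] fin by blast
  have "acyclic B" unfolding acyclic_def
    using trancl_id[OF wo_trans[OF wo]] wo_irrefl[OF wo] by simp
  then have "wf B" using finite_acyclic_wf finB by blast
  then obtain z where "z \<in> R" "\<And>y. (y, z) \<in> B \<Longrightarrow> y \<notin> R" using wfE_min R by metis
  then show ?thesis unfolding maximal_set_def by blast
qed

lemma smo_len: "length (smo_seq I r B t) = t"
  by (induction t) auto

lemma smo_prefix: "take a (smo_seq I r B (a + k)) = smo_seq I r B a"
proof (induction k)
  case 0 then show ?case using smo_len by (metis add_0_right order_refl take_all)
next
  case (Suc k)
  have "take a (smo_seq I r B (a + Suc k)) = take a (smo_seq I r B (a + k))"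
    using smo_len[of I r B "a+k"] by simp
  then show ?case using Suc by simp
qed

lemma smo_nth:
  assumes "a < n"
  shows "smo_seq I r B n ! a = (ARG_MIN r i. i \<in> maximal_set (I - set (smo_seq I r B a)) B)"
proof -
  have "take (Suc a) (smo_seq I r B n) = smo_seq I r B (Suc a)"
    using smo_prefix[of "Suc a" I r B "n - Suc a"] assms by simp
  then have "smo_seq I r B n ! a = smo_seq I r B (Suc a) ! a"
    by (metis lessI nth_take)
  then show ?thesis using smo_len[of I r B a] by (simp add: nth_append)
qed

lemma smo_take:
  assumes "a \<le> n"
  shows "take a (smo_seq I r B n) = smo_seq I r B a"
  using smo_prefix[of a I r B "n - a"] assms by simp

lemma smo_good:
  assumes wo: "weak_order I B" and fin: "finite I"
  shows "t \<le> card I \<Longrightarrow> distinct (smo_seq I r B t) \<and> set (smo_seq I r B t) \<subseteq> I"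
proof (induction t)
  case 0 then show ?case by simp
next
  case (Suc t)
  let ?xs = "smo_seq I r B t"
  have ih: "distinct ?xs" "set ?xs \<subseteq> I" using Suc by auto
  have "card (set ?xs) = t" using distinct_card[OF ih(1)] smo_len by metis
  then have "I - set ?xs \<noteq> {}" using Suc.prems
    by (metis Diff_eq_empty_iff Suc_le_eq card_mono finite_set not_le)
  then obtain x where x: "x \<in> I - set ?xs" by blast
  obtain z where "z \<in> maximal_set (I - set ?xs) B" using maxset_ne[OF wo fin _ x] by blast
  then have "(ARG_MIN r i. i \<in> maximal_set (I - set ?xs) B) \<in> maximal_set (I - set ?xs) B"
    using arg_min_nat_lemma[of "\<lambda>i. i \<in> maximal_set (I - set ?xs) B"] by blast
  then have "(ARG_MIN r i. i \<in> maximal_set (I - set ?xs) B) \<in> I - set ?xs"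
    unfolding maximal_set_def by blast
  then show ?case using ih by simp
qed

lemma smo_props:
  assumes wo: "weak_order I B" and fin: "finite I" and rb: "bij_betw r I {1..card I}"
  shows "B \<subseteq> smo_order I r B"
    and "(i,j) \<in> smo_order I r B \<Longrightarrow> (j,i) \<notin> B"
    and "(i,j) \<in> smo_order I r B \<Longrightarrow> (i,j) \<notin> B \<Longrightarrow> r i < r j"
proof -
  define n where "n = card I"
  define X where "X = smo_seq I r B n"
  have ord: "smo_order I r B = {(X ! a, X ! b) | a b. a < b \<and> b < n}"
    unfolding smo_order_def X_def n_def Let_def by simp
  have dX: "distinct X" and sX: "set X \<subseteq> I" using smo_good[OF wo fin, of n r] unfolding X_def n_def by auto
  have lX: "length X = n" unfolding X_def using smo_len by metis
  have setX: "set X = I" using card_subset_eq[OF fin sX] distinct_card[OF dX] lX n_def by simp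
  have XI: "b < n \<Longrightarrow> X ! b \<in> I" for b using sX lX by auto
  have memM: "a < n \<Longrightarrow> X ! a \<in> maximal_set (I - set (take a X)) B
      \<and> (\<forall>y \<in> maximal_set (I - set (take a X)) B. r (X ! a) \<le> r y)" for a
  proof -
    assume a: "a < n"
    have tk: "take a X = smo_seq I r B a" using smo_take[of a n] a unfolding X_def by simp
    have eq: "X ! a = (ARG_MIN r i. i \<in> maximal_set (I - set (take a X)) B)"
      using smo_nth[OF a] tk unfolding X_def by simp
    have "X ! a \<in> I - set (take a X)"
      using a dX lX XI by (auto simp: in_set_conv_nth nth_eq_iff_index_eq)
    then have "X ! a \<in> I - set (take a X)" by simp
    from eq arg_min_nat_lemma[of "\<lambda>i. i \<in> maximal_set (I - set (take a X)) B" _ r]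
    show ?thesis using maxset_ne[OF wo fin, of "I - set (take a X)"] \<open>X ! a \<in> I - set (take a X)\<close>
      by (metis Diff_subset)
  qed
  have later: "a \<le> b \<Longrightarrow> b < n \<Longrightarrow> X ! b \<in> I - set (take a X)" for a b
    using dX lX XI by (auto simp: in_set_conv_nth nth_eq_iff_index_eq)
  have P1: "a < b \<Longrightarrow> b < n \<Longrightarrow> (X ! b, X ! a) \<notin> B" for a b
  proof -
    assume ab: "a < b" "b < n"
    have "X ! a \<noteq> X ! b" using dX lX ab by (simp add: nth_eq_iff_index_eq)
    then show ?thesis using memM[of a] later[of a b] ab unfolding maximal_set_def by auto
  qed
  show "(i,j) \<in> smo_order I r B \<Longrightarrow> (j,i) \<notin> B" using P1 unfolding ord by blast
  show "B \<subseteq> smo_order I r B"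
  proof
    fix p assume p: "p \<in> B"
    obtain i j where ij: "p = (i,j)" by fastforce
    have "i \<in> I" "j \<in> I" using wo p ij unfolding weak_order_def by auto
    then obtain a b where a: "a < n" "X ! a = i" and b: "b < n" "X ! b = j"
      using setX lX by (metis in_set_conv_nth)
    have "i \<noteq> j" using wo_irrefl[OF wo] p ij by blast
    then have "a \<noteq> b" using a b by blast
    moreover have "\<not> b < a" using P1[of b a] a b p ij by blast
    ultimately show "p \<in> smo_order I r B" unfolding ord using a b ij by force
  qed
  show "(i,j) \<in> smo_order I r B \<Longrightarrow> (i,j) \<notin> B \<Longrightarrow> r i < r j"
  proof -
    assume "(i,j) \<in> smo_order I r B" and nij: "(i,j) \<notin> B"
    then obtain a b where ab: "a < b" "b < n" "i = X ! a" "j = X ! b" unfolding ord by blast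
    have ine: "i \<noteq> j" using dX lX ab by (simp add: nth_eq_iff_index_eq)
    have iM: "i \<in> maximal_set (I - set (take a X)) B" and rle: "\<forall>y \<in> maximal_set (I - set (take a X)) B. r i \<le> r y"
      using memM[of a] ab by auto
    have jR: "j \<in> I - set (take a X)" using later[of a b] ab by simp
    have "j \<in> maximal_set (I - set (take a X)) B"
      unfolding maximal_set_def
    proof (intro CollectI conjI ballI jR)
      fix k assume k: "k \<in> I - set (take a X) - {j}"
      show "(k, j) \<notin> B"
      proof
        assume kj: "(k,j) \<in> B"
        have "i \<in> I" "j \<in> I" "k \<in> I" using k jR iM unfolding maximal_set_def by auto
        then have "(k,i) \<in> B" using wo nij kj unfolding weak_order_def by blast
        moreover have "k \<noteq> i" using kj nij by blast
        ultimately show False using iM k unfolding maximal_set_def by blast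
      qed
    qed
    then have "r i \<le> r j" using rle by blast
    moreover have "r i \<noteq> r j" using rb ine jR iM unfolding bij_betw_def inj_on_def maximal_set_def by blast
    ultimately show "r i < r j" by simp
  qed
qed



lemma topo:
  assumes "finite E" "acyclic E"
  shows "finite A \<Longrightarrow> \<exists>r. bij_betw r A {1..card A} \<and> (\<forall>j\<in>A. \<forall>i\<in>A. (j,i) \<in> E \<longrightarrow> r j < r i)"
proof (induction "card A" arbitrary: A)
  case 0
  then have "A = {}" by simp
  then show ?case by (simp add: bij_betw_def)
next
  case (Suc n)
  then have "A \<noteq> {}" by auto
  then obtain x where "x \<in> A" by blast
  have "wf (E\<inverse>)" using finite_acyclic_wf_converse assms by blast
  then obtain z where z: "z \<in> A" "\<And>y. (y, z) \<in> E\<inverse> \<Longrightarrow> y \<notin> A" using wfE_min \<open>x \<in> A\<close> by metis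
  have cA: "card (A - {z}) = n" using Suc z by simp
  obtain r where r: "bij_betw r (A - {z}) {1..n}" "\<forall>j\<in>A-{z}. \<forall>i\<in>A-{z}. (j,i) \<in> E \<longrightarrow> r j < r i"
    using Suc.hyps(1)[OF cA[symmetric]] Suc.prems cA by auto
  define r' where "r' = r(z := Suc n)"
  have b1: "bij_betw r' (A - {z}) {1..n}" using r(1) unfolding r'_def
    by (rule bij_betw_cong[THEN iffD1, rotated]) auto
  have "bij_betw r' ((A - {z}) \<union> {z}) ({1..n} \<union> {r' z})"
    using notIn_Un_bij_betw[OF _ _ b1, of z] unfolding r'_def by simp
  moreover have "(A - {z}) \<union> {z} = A" using z by auto
  moreover have "{1..n} \<union> {r' z} = {1..card A}" using Suc.hyps(2) unfolding r'_def by auto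
  ultimately have "bij_betw r' A {1..card A}" by simp
  moreover have "\<forall>j\<in>A. \<forall>i\<in>A. (j,i) \<in> E \<longrightarrow> r' j < r' i"
  proof (intro ballI impI)
    fix j i assume ji: "j \<in> A" "i \<in> A" "(j,i) \<in> E"
    then have "j \<noteq> z" using z by auto
    show "r' j < r' i"
    proof (cases "i = z")
      case True
      have "r j \<in> {1..n}" using r(1) ji \<open>j \<noteq> z\<close> by (auto simp: bij_betw_def)
      then show ?thesis using True \<open>j \<noteq> z\<close> unfolding r'_def by simp
    next
      case False
      then show ?thesis using r(2) ji \<open>j \<noteq> z\<close> unfolding r'_def by simp
    qed
  qed
  ultimately show ?case by blast
qed

lemma min_cycle:
  assumes "\<not> acyclic E"
  shows "\<exists>g n. n > 0 \<and> (\<forall>t. (g t, g (Suc t)) \<in> E) \<and> (\<forall>a b. g a = g b \<longleftrightarrow> a mod n = b mod n)"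
proof -
  have "\<exists>n x. n > 0 \<and> (x,x) \<in> E ^^ n" using assms unfolding acyclic_def by (auto simp: trancl_power)
  then have ex: "\<exists>n. n > 0 \<and> (\<exists>x. (x,x) \<in> E ^^ n)" by blast
  define n where "n = (LEAST n. n > 0 \<and> (\<exists>x. (x,x) \<in> E ^^ n))"
  have n: "n > 0 \<and> (\<exists>x. (x,x) \<in> E ^^ n)" using LeastI_ex[OF ex] unfolding n_def .
  have nmin: "m < n \<Longrightarrow> \<not> (m > 0 \<and> (\<exists>x. (x,x) \<in> E ^^ m))" for m
    using not_less_Least unfolding n_def by blast
  obtain x where "(x,x) \<in> E ^^ n" using n by blast
  then obtain f where f: "f 0 = x" "f n = x" "\<forall>i<n. (f i, f (Suc i)) \<in> E" using relpow_fun_conv by metis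
  have finj: "a < b \<Longrightarrow> b < n \<Longrightarrow> f a \<noteq> f b" for a b
  proof
    assume ab: "a < b" "b < n" "f a = f b"
    have "(f a, f a) \<in> E ^^ (b - a)"
      unfolding relpow_fun_conv
      by (rule exI[of _ "\<lambda>t. f (a + t)"]) (use ab f in auto)
    then show False using nmin[of "b - a"] ab by auto
  qed
  define g where "g t = f (t mod n)" for t
  have "(g t, g (Suc t)) \<in> E" for t
  proof -
    have m: "t mod n < n" using n by simp
    show ?thesis
    proof (cases "Suc (t mod n) = n")
      case True
      then have "g (Suc t) = f n" unfolding g_def using f by (simp add: mod_Suc)
      then show ?thesis using f(3) m True unfolding g_def by (metis)
    next
      case False
      then have "g (Suc t) = f (Suc (t mod n))" unfolding g_def by (simp add: mod_Suc)
      then show ?thesis using f(3) m unfolding g_def by metis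
    qed
  qed
  moreover have "g a = g b \<longleftrightarrow> a mod n = b mod n" for a b
  proof
    assume "g a = g b"
    then show "a mod n = b mod n" using finj[of "a mod n" "b mod n"] finj[of "b mod n" "a mod n"] n
      unfolding g_def by (metis linorder_neqE_nat mod_less_divisor)
  qed (simp add: g_def)
  ultimately show ?thesis using n by blast
qed



lemma to_wo: "total_order A P \<Longrightarrow> weak_order A P"
  unfolding total_order_def by (rule conjunct1)
lemma wo_sub: "weak_order A P \<Longrightarrow> (a,b) \<in> P \<Longrightarrow> a \<in> A \<and> b \<in> A"
proof -
  assume "weak_order A P" "(a,b) \<in> P"
  moreover have "P \<subseteq> A \<times> A" using \<open>weak_order A P\<close> unfolding weak_order_def by (rule conjunct1)
  ultimately show ?thesis by blast
qed
lemma wo_parts: "weak_order A P \<Longrightarrow>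
     (\<forall>x\<in>A. \<forall>y\<in>A. (x,y) \<in> P \<longrightarrow> (y,x) \<notin> P) \<and>
     (\<forall>x\<in>A. \<forall>y\<in>A. \<forall>z\<in>A. (x,y) \<in> P \<longrightarrow> (y,z) \<in> P \<longrightarrow> (x,z) \<in> P) \<and>
     (\<forall>x\<in>A. \<forall>y\<in>A. \<forall>z\<in>A. (x,y) \<notin> P \<longrightarrow> (y,z) \<notin> P \<longrightarrow> (x,z) \<notin> P)"
  unfolding weak_order_def by (rule conjunct2)
lemma wo_asym: "weak_order A P \<Longrightarrow> (a,b) \<in> P \<Longrightarrow> (b,a) \<notin> P"
proof -
  assume w: "weak_order A P" and ab: "(a,b) \<in> P"
  have "a \<in> A" "b \<in> A" using wo_sub[OF w ab] by auto
  then show ?thesis using wo_parts[OF w] ab by blast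
qed
lemma wo_tr: "weak_order A P \<Longrightarrow> (a,b) \<in> P \<Longrightarrow> (b,c) \<in> P \<Longrightarrow> (a,c) \<in> P"
proof -
  assume w: "weak_order A P" and ab: "(a,b) \<in> P" and bc: "(b,c) \<in> P"
  have "a \<in> A" "b \<in> A" "c \<in> A" using wo_sub[OF w ab] wo_sub[OF w bc] by auto
  then show ?thesis using wo_parts[OF w] ab bc by blast
qed
lemma wo_negtr: "weak_order A P \<Longrightarrow> (x,z) \<in> P \<Longrightarrow> (x,y) \<notin> P \<Longrightarrow> y \<in> A \<Longrightarrow> (y,z) \<in> P"
proof -
  assume w: "weak_order A P" and xz: "(x,z) \<in> P" and xy: "(x,y) \<notin> P" and y: "y \<in> A"
  have "x \<in> A" "z \<in> A" using wo_sub[OF w xz] by auto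
  then show ?thesis using wo_parts[OF w] xz xy y by blast
qed

lemma cycle_improve:
  fixes \<mu> :: "'i \<Rightarrow> 's option" and g :: "nat \<Rightarrow> 'i"
  assumes PO: "\<forall>i\<in>I. total_order (outcomes S) (P i)"
    and WO: "\<forall>s\<in>S. weak_order I (pr s)"
    and st: "stable I S P q pr \<mu>"
    and n: "n > 0"
    and gI: "\<forall>t. g t \<in> I"
    and edge: "\<forall>t. \<exists>s\<in>S. \<mu> (g t) = Some s \<and> (Some s, \<mu> (g (Suc t))) \<in> P (g (Suc t)) \<and> (g t, g (Suc t)) \<notin> pr s"
    and gmod: "\<forall>a b. g a = g b \<longleftrightarrow> a mod n = b mod n"
  shows "\<exists>\<mu>'. stable I S P q pr \<mu>' \<and> pareto_dominates I P \<mu>' \<mu>"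
proof -
  have PW: "i \<in> I \<Longrightarrow> weak_order (outcomes S) (P i)" for i using PO to_wo by blast
  have gs: "g (Suc a) = g (Suc b) \<longleftrightarrow> g a = g b" for a b
  proof -
    have "Suc a mod n = Suc b mod n \<longleftrightarrow> a mod n = b mod n" using n by (simp add: mod_Suc)
    then show ?thesis using gmod by presburger
  qed
  define succ where "succ i = (if i \<in> range g then g (Suc (SOME t. g t = i)) else i)" for i
  have sg: "succ (g t) = g (Suc t)" for t
  proof -
    have "g (SOME t'. g t' = g t) = g t" by (rule someI) (rule refl)
    then show ?thesis unfolding succ_def using gs by auto
  qed
  have so: "i \<notin> range g \<Longrightarrow> succ i = i" for i unfolding succ_def by simp
  have inj: "inj succ"
  proof (rule injI)
    fix a b assume ab: "succ a = succ b"
    show "a = b"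
    proof (cases "a \<in> range g"; cases "b \<in> range g")
      assume "a \<in> range g" "b \<in> range g"
      then obtain ta tb where "a = g ta" "b = g tb" by blast
      then show ?thesis using ab sg gs by metis
    next
      assume "a \<in> range g" "b \<notin> range g"
      then show ?thesis using ab sg so by (metis rangeE rangeI)
    next
      assume "a \<notin> range g" "b \<in> range g"
      then show ?thesis using ab sg so by (metis rangeE rangeI)
    next
      assume "a \<notin> range g" "b \<notin> range g"
      then show ?thesis using ab so by metis
    qed
  qed
  have surj: "\<exists>k. i = succ k" for i
  proof (cases "i \<in> range g")
    case True
    then obtain t where t: "i = g t" by blast
    have "g (Suc (t + n - 1)) = g t" using gmod n by (simp add: Suc_diff_le)
    then show ?thesis using t sg by metis
  next
    case False then show ?thesis using so by metis
  qed
  define \<mu>' where "\<mu>' = \<mu> \<circ> inv succ"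
  have m'succ: "\<mu>' (succ i) = \<mu> i" for i unfolding \<mu>'_def using inv_f_f[OF inj] by simp
  have m'on: "\<mu>' (g (Suc t)) = \<mu> (g t)" for t using m'succ sg by metis
  have rgI: "range g \<subseteq> I" using gI by blast
  have sI: "i \<in> I \<Longrightarrow> succ i \<in> I" for i
  proof (cases "i \<in> range g")
    case True then obtain t where "i = g t" by blast
    then show ?thesis using sg gI by simp
  qed (use so in simp)
  have sO: "i \<notin> I \<Longrightarrow> succ i = i" for i using so rgI by blast
  have better: "\<mu>' i = \<mu> i \<or> (\<mu>' i, \<mu> i) \<in> P i" for i
  proof -
    obtain k where k: "i = succ k" using surj by blast
    show ?thesis
    proof (cases "k \<in> range g")
      case True
      then obtain t where t: "k = g t" by blast
      then have i: "i = g (Suc t)" using k sg by simp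
      from edge obtain s where "\<mu> (g t) = Some s" "(Some s, \<mu> (g (Suc t))) \<in> P (g (Suc t))" by blast
      then show ?thesis using i m'on by simp
    next
      case False then show ?thesis using k so m'succ by metis
    qed
  qed
  have desc: "\<mu>' j \<noteq> \<mu> j \<Longrightarrow> \<exists>t. j = g (Suc t)" for j
  proof -
    assume ne: "\<mu>' j \<noteq> \<mu> j"
    obtain k where k: "j = succ k" using surj by blast
    show ?thesis
    proof (cases "k \<in> range g")
      case True then show ?thesis using k sg by auto
    next
      case False then show ?thesis using k so m'succ ne by metis
    qed
  qed
  have wp_imp: "i \<in> I \<Longrightarrow> weak_pref (P i) (\<mu>' i) (\<mu> i)" for i
    using better unfolding weak_pref_def by blast
  have stx: "matching I S q \<mu>" "\<forall>i\<in>I. weak_pref (P i) (\<mu> i) None"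
    "\<forall>i\<in>I. \<forall>s\<in>S. (Some s, \<mu> i) \<in> P i \<longrightarrow> card (assigned I \<mu> s) = q s"
    "\<not> (\<exists>s\<in>S. \<exists>j\<in>assigned I \<mu> s. \<exists>i\<in>I. i \<notin> assigned I \<mu> s \<and>
           weak_pref (P i) (Some s) (\<mu> i) \<and> (i, j) \<in> pr s)"
    using st unfolding stable_def by blast+
  have asg: "assigned I \<mu>' s = succ ` assigned I \<mu> s" for s
  proof
    show "succ ` assigned I \<mu> s \<subseteq> assigned I \<mu>' s"
      unfolding assigned_def using sI m'succ by auto
    show "assigned I \<mu>' s \<subseteq> succ ` assigned I \<mu> s"
    proof
      fix i assume i: "i \<in> assigned I \<mu>' s"
      obtain k where k: "i = succ k" using surj by blast
      have "k \<in> I" using sO k i unfolding assigned_def by force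
      then show "i \<in> succ ` assigned I \<mu> s" using k i m'succ unfolding assigned_def by force
    qed
  qed
  have card_eq: "card (assigned I \<mu>' s) = card (assigned I \<mu> s)" for s
    unfolding asg by (rule card_image) (rule inj_on_subset[OF inj subset_UNIV])
  have mo: "\<forall>i\<in>I. \<mu> i \<in> outcomes S" and mn: "\<forall>i. i \<notin> I \<longrightarrow> \<mu> i = None"
    and mc: "\<forall>s\<in>S. card (assigned I \<mu> s) \<le> q s" using stx(1) unfolding matching_def by blast+
  have "matching I S q \<mu>'"
    unfolding matching_def
  proof (intro conjI ballI allI impI)
    fix i assume i: "i \<in> I"
    show "\<mu>' i \<in> outcomes S" using better[of i] mo i wo_sub[OF PW[OF i]] by auto
  next
    fix i assume "i \<notin> I" then show "\<mu>' i = None" using sO[of i] m'succ[of i] mn by simp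
  next
    fix s assume "s \<in> S" then show "card (assigned I \<mu>' s) \<le> q s"
      using card_eq[of s] mc by simp
  qed
  moreover have "\<forall>i\<in>I. weak_pref (P i) (\<mu>' i) None"
  proof
    fix i assume i: "i \<in> I"
    show "weak_pref (P i) (\<mu>' i) None"
      using better[of i] stx(2) i wo_tr[OF PW[OF i]] unfolding weak_pref_def by metis
  qed
  moreover have "\<forall>i\<in>I. \<forall>s\<in>S. (Some s, \<mu>' i) \<in> P i \<longrightarrow> card (assigned I \<mu>' s) = q s"
  proof (intro ballI impI)
    fix i s assume i: "i \<in> I" and s: "s \<in> S" and p: "(Some s, \<mu>' i) \<in> P i"
    have "(Some s, \<mu> i) \<in> P i" using better[of i] p wo_tr[OF PW[OF i]] by metis
    then show "card (assigned I \<mu>' s) = q s" using stx(3) i s card_eq by metis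
  qed
  moreover have "\<not> (\<exists>s\<in>S. \<exists>j\<in>assigned I \<mu>' s. \<exists>i\<in>I. i \<notin> assigned I \<mu>' s \<and>
           weak_pref (P i) (Some s) (\<mu>' i) \<and> (i, j) \<in> pr s)"
  proof
    assume "\<exists>s\<in>S. \<exists>j\<in>assigned I \<mu>' s. \<exists>i\<in>I. i \<notin> assigned I \<mu>' s \<and>
           weak_pref (P i) (Some s) (\<mu>' i) \<and> (i, j) \<in> pr s"
    then obtain s j i where s: "s \<in> S" and j: "j \<in> assigned I \<mu>' s" and i: "i \<in> I"
      and ni: "i \<notin> assigned I \<mu>' s" and w: "weak_pref (P i) (Some s) (\<mu>' i)" and ij: "(i,j) \<in> pr s"
      by blast
    have "\<mu>' i \<noteq> Some s" using ni i unfolding assigned_def by simp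
    then have p1: "(Some s, \<mu>' i) \<in> P i" using w unfolding weak_pref_def by simp
    then have p2: "(Some s, \<mu> i) \<in> P i" using better[of i] wo_tr[OF PW[OF i]] by metis
    then have "\<mu> i \<noteq> Some s" using wo_asym[OF PW[OF i]] by metis
    then have niu: "i \<notin> assigned I \<mu> s" unfolding assigned_def by simp
    have wu: "weak_pref (P i) (Some s) (\<mu> i)" using p2 unfolding weak_pref_def by simp
    have jI: "j \<in> I" and mj: "\<mu>' j = Some s" using j unfolding assigned_def by auto
    show False
    proof (cases "\<mu> j = Some s")
      case True
      then have "j \<in> assigned I \<mu> s" using jI unfolding assigned_def by simp
      then show False using stx(4) s i niu wu ij by blast
    next
      case False
      then obtain t where t: "j = g (Suc t)" using desc mj by metis
      from edge obtain s' where s': "s' \<in> S" "\<mu> (g t) = Some s'" "(g t, g (Suc t)) \<notin> pr s'" by blast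
      have "\<mu> (g t) = Some s" using m'on t mj by metis
      then have ss: "s' = s" using s' by simp
      have "(i, g t) \<in> pr s"
      proof (rule ccontr)
        assume "(i, g t) \<notin> pr s"
        then have "(g t, j) \<in> pr s" using wo_negtr[OF WO[rule_format, OF s] ij] gI by blast
        then show False using s' ss t by simp
      qed
      moreover have "g t \<in> assigned I \<mu> s" using gI \<open>\<mu> (g t) = Some s\<close> unfolding assigned_def by simp
      ultimately show False using stx(4) s i niu wu by blast
    qed
  qed
  ultimately have "stable I S P q pr \<mu>'" unfolding stable_def by blast
  moreover have "pareto_dominates I P \<mu>' \<mu>"
    unfolding pareto_dominates_def
  proof (intro conjI)
    show "\<forall>i\<in>I. weak_pref (P i) (\<mu>' i) (\<mu> i)" using wp_imp by blast
    from edge obtain s where "\<mu> (g 0) = Some s" "(Some s, \<mu> (g (Suc 0))) \<in> P (g (Suc 0))" by blast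
    then show "\<exists>i\<in>I. (\<mu>' i, \<mu> i) \<in> P i" using m'on[of 0] gI by metis
  qed
  ultimately show ?thesis by blast
qed



lemma stable_sub:
  assumes "\<forall>s\<in>S. pr s \<subseteq> pr' s" and "stable I S P q pr' \<mu>"
  shows "stable I S P q pr \<mu>"
  using assms unfolding stable_def by blast

theorem corollary4:
  fixes I :: "'i set" and S :: "'s set"
    and P :: "'i \<Rightarrow> 's option rel" and q :: "'s \<Rightarrow> nat" and pr :: "'s \<Rightarrow> 'i rel"
  assumes "finite I" and "card I \<ge> 3" and "finite S"
    and "\<forall>i\<in>I. total_order (outcomes S) (P i)"
    and "\<forall>s\<in>S. q s > 0"
    and "\<forall>s\<in>S. weak_order I (pr s)"
  shows "SOSM I S P q pr \<subseteq> (\<Union>pr'\<in>single_tb_extensions I S pr. SOSM I S P q pr')"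
proof
  fix \<mu> assume mu: "\<mu> \<in> SOSM I S P q pr"
  have st: "stable I S P q pr \<mu>" and nd: "\<not> (\<exists>\<mu>'. stable I S P q pr \<mu>' \<and> pareto_dominates I P \<mu>' \<mu>)"
    using mu unfolding SOSM_def by auto
  define E where "E = {(j,i). j \<in> I \<and> i \<in> I \<and> (\<exists>s\<in>S. \<mu> j = Some s \<and> (Some s, \<mu> i) \<in> P i \<and> (j,i) \<notin> pr s)}"
  have EI: "E \<subseteq> I \<times> I" unfolding E_def by auto
  have finE: "finite E" using finite_subset[OF EI] assms(1) by blast
  have acyc: "acyclic E"
  proof (rule ccontr)
    assume "\<not> acyclic E"
    then obtain g n where n: "n > 0" and ge: "\<forall>t. (g t, g (Suc t)) \<in> E"
      and gm: "\<forall>a b. g a = g b \<longleftrightarrow> a mod n = b mod n" using min_cycle by metis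
    have gI: "\<forall>t. g t \<in> I" using ge EI by blast
    have edge: "\<forall>t. \<exists>s\<in>S. \<mu> (g t) = Some s \<and> (Some s, \<mu> (g (Suc t))) \<in> P (g (Suc t)) \<and> (g t, g (Suc t)) \<notin> pr s"
      using ge unfolding E_def by blast
    show False using cycle_improve[OF assms(4) assms(6) st n gI edge gm] nd by blast
  qed
  obtain r where rb: "bij_betw r I {1..card I}" and re: "\<forall>j\<in>I. \<forall>i\<in>I. (j,i) \<in> E \<longrightarrow> r j < r i"
    using topo[OF finE acyc assms(1)] by blast
  define pr' where "pr' = (\<lambda>s. smo_order I r (pr s))"
  have ext: "pr' \<in> single_tb_extensions I S pr"
    unfolding single_tb_extensions_def pr'_def using rb by blast
  have sub: "\<forall>s\<in>S. pr s \<subseteq> pr' s" unfolding pr'_def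
    using smo_props(1)[OF _ assms(1) rb] assms(6) by blast
  have stx: "matching I S q \<mu>" "\<forall>i\<in>I. weak_pref (P i) (\<mu> i) None"
    "\<forall>i\<in>I. \<forall>s\<in>S. (Some s, \<mu> i) \<in> P i \<longrightarrow> card (assigned I \<mu> s) = q s"
    "\<not> (\<exists>s\<in>S. \<exists>j\<in>assigned I \<mu> s. \<exists>i\<in>I. i \<notin> assigned I \<mu> s \<and>
           weak_pref (P i) (Some s) (\<mu> i) \<and> (i, j) \<in> pr s)"
    using st unfolding stable_def by blast+
  have fair: "\<not> (\<exists>s\<in>S. \<exists>j\<in>assigned I \<mu> s. \<exists>i\<in>I. i \<notin> assigned I \<mu> s \<and>
           weak_pref (P i) (Some s) (\<mu> i) \<and> (i, j) \<in> pr' s)"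
  proof
    assume "\<exists>s\<in>S. \<exists>j\<in>assigned I \<mu> s. \<exists>i\<in>I. i \<notin> assigned I \<mu> s \<and>
           weak_pref (P i) (Some s) (\<mu> i) \<and> (i, j) \<in> pr' s"
    then obtain s j i where s: "s \<in> S" and j: "j \<in> assigned I \<mu> s" and i: "i \<in> I"
      and ni: "i \<notin> assigned I \<mu> s" and w: "weak_pref (P i) (Some s) (\<mu> i)" and ij: "(i,j) \<in> pr' s"
      by blast
    have nij: "(i,j) \<notin> pr s" using stx(4) s j i ni w by blast
    have wo: "weak_order I (pr s)" using assms(6) s by blast
    have nji: "(j,i) \<notin> pr s" using smo_props(2)[OF wo assms(1) rb] ij unfolding pr'_def by blast
    have "r i < r j" using smo_props(3)[OF wo assms(1) rb] ij nij unfolding pr'_def by blast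
    moreover have "\<mu> i \<noteq> Some s" using ni i unfolding assigned_def by simp
    then have "(Some s, \<mu> i) \<in> P i" using w unfolding weak_pref_def by simp
    then have "(j,i) \<in> E" using j i s nji unfolding E_def assigned_def by blast
    then have "r j < r i" using re i j unfolding assigned_def by blast
    ultimately show False by simp
  qed
  have "stable I S P q pr' \<mu>" unfolding stable_def using stx(1-3) fair by blast
  moreover have "\<not> (\<exists>\<mu>'. stable I S P q pr' \<mu>' \<and> pareto_dominates I P \<mu>' \<mu>)"
    using nd stable_sub[OF sub] by blast
  ultimately have "\<mu> \<in> SOSM I S P q pr'" unfolding SOSM_def by blast
  then show "\<mu> \<in> (\<Union>pr'\<in>single_tb_extensions I S pr. SOSM I S P q pr')" using ext by blast
qed

end
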